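(* Let $(Z_n)_{n\ge0}$ be a Galton--Watson process with $Z_0=1$ and offspring distribution $F$ on $\{0,1,2,\dots\}$ with mean $m:=\mathbb E\xi>1$, and let $W_n:=Z_n/m^n$. Assume $F$ is dominated varying, i.e. $\sup_x\overline F(x/2)/\overline F(x)<\infty$, and that for some $\delta>0$ and $c'<\infty$, $\overline F(xy)\le c'\,\overline F(x)/y^{1+\delta}$ for all $x,y>1$. Then there exists a constant $c<\infty$ such that $\Pr\{W_n>x\}\le c\overline F(x)$ for all $n$ and $x$.
   Context: The process is defined by $Z_{n+1}=\sum_{i=1}^{Z_n}\xi_i^{(n)}$, where $\xi_i^{(n)}$, $i\ge1$, $n\ge0$, are i.i.d. copies of a random variable $\xi$ with distribution $F$ on $\{0,1,2,\dots\}$; $\overline F(x):=\Pr\{\xi>x\}$ for real $x$. *)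

theory Defs
  imports "HOL-Probability.Probability"
begin

fun iid_sum :: "nat pmf \<Rightarrow> nat \<Rightarrow> nat pmf" where
  "iid_sum F 0 = return_pmf 0"
| "iid_sum F (Suc k) = bind_pmf (iid_sum F k) (\<lambda>s. map_pmf (\<lambda>x. s + x) F)"

fun gw :: "nat pmf \<Rightarrow> nat \<Rightarrow> nat pmf" where
  "gw F 0 = return_pmf 1"
| "gw F (Suc n) = bind_pmf (gw F n) (iid_sum F)"

definition Fbar :: "nat pmf \<Rightarrow> real \<Rightarrow> real" where
  "Fbar F x = measure_pmf.prob F {k. real k > x}"

definition offspring_mean :: "nat pmf \<Rightarrow> real" where
  "offspring_mean F = measure_pmf.expectation F real"

end

theory Submission
  imports Defs
begin

lemma iid_sum_Suc': "iid_sum G (Suc k) = bind_pmf G (\<lambda>x. map_pmf (\<lambda>s. s + x) (iid_sum G k))"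
  by (simp add: map_pmf_def bind_commute_pmf[of "iid_sum G k" G] bind_assoc_pmf bind_return_pmf)

lemma iid_sum_exp:
  "(\<integral>\<^sup>+s. ennreal (exp (l * real s)) \<partial>iid_sum G k) = (\<integral>\<^sup>+x. ennreal (exp (l * real x)) \<partial>G) ^ k"
proof (induction k)
  case 0 then show ?case by simp
next
  case (Suc k)
  have "(\<integral>\<^sup>+s. ennreal (exp (l * real s)) \<partial>iid_sum G (Suc k))
     = (\<integral>\<^sup>+s. (\<integral>\<^sup>+x. ennreal (exp (l * real s)) * ennreal (exp (l * real x)) \<partial>G) \<partial>iid_sum G k)"
    by (simp add: distrib_left exp_add ennreal_mult)
  also have "\<dots> = (\<integral>\<^sup>+s. ennreal (exp (l * real s)) * (\<integral>\<^sup>+x. ennreal (exp (l * real x)) \<partial>G) \<partial>iid_sum G k)"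
    by (simp add: nn_integral_cmult)
  also have "\<dots> = (\<integral>\<^sup>+s. ennreal (exp (l * real s)) \<partial>iid_sum G k) * (\<integral>\<^sup>+x. ennreal (exp (l * real x)) \<partial>G)"
    by (simp add: nn_integral_multc)
  finally show ?case using Suc by (simp add: mult.commute)
qed


lemma emeasure_iid_Suc:
  "emeasure (iid_sum G (Suc k)) {s. t < real s} = (\<integral>\<^sup>+x. emeasure (iid_sum G k) {s. t < real (s + x)} \<partial>G)"
  by (simp only: iid_sum_Suc' emeasure_bind_pmf emeasure_map_pmf) (simp add: vimage_def)

lemma iid_sum_trunc:
  "emeasure (iid_sum G k) {s. t < real s} \<le> of_nat k * emeasure G {x. U < x}
     + emeasure (iid_sum (map_pmf (\<lambda>x. min x U) G) k) {s. t < real s}"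
proof (induction k arbitrary: t)
  case 0 then show ?case by simp
next
  case (Suc k)
  let ?G' = "map_pmf (\<lambda>x. min x U) G"
  let ?P = "emeasure G {x. U < x}"
  have pw: "emeasure (iid_sum G k) {s. t < real (s + x)} \<le> indicator {x. U < x} x + (of_nat k * ?P
     + emeasure (iid_sum ?G' k) {s. t < real (s + min x U)})" for x
  proof (cases "U < x")
    case True
    have "emeasure (iid_sum G k) {s. t < real (s + x)} \<le> 1"
      by (simp add: measure_pmf.emeasure_le_1)
    then show ?thesis using True by (simp add: add_increasing2)
  next
    case False
    have e1: "{s. t < real (s + x)} = {s. t - real x < real s}" by auto
    have "emeasure (iid_sum G k) {s. t < real (s + x)} \<le> of_nat k * ?P
     + emeasure (iid_sum ?G' k) {s. t - real x < real s}" using Suc.IH[of "t - real x"] e1 by simp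
    moreover have "min x U = x" using False by simp
    moreover have "{s. t - real x < real s} = {s. t < real s + real x}" by auto
    ultimately show ?thesis using False by (simp add: e1)
  qed
  have "emeasure (iid_sum G (Suc k)) {s. t < real s} \<le> (\<integral>\<^sup>+x. indicator {x. U < x} x + (of_nat k * ?P
     + emeasure (iid_sum ?G' k) {s. t < real (s + min x U)}) \<partial>G)"
    unfolding emeasure_iid_Suc by (rule nn_integral_mono) (use pw in auto)
  also have "\<dots> = ?P + (of_nat k * ?P + (\<integral>\<^sup>+x. emeasure (iid_sum ?G' k) {s. t < real (s + min x U)} \<partial>G))"
    by (simp add: nn_integral_add measure_pmf.emeasure_space_1 nn_integral_const)
  also have "(\<integral>\<^sup>+x. emeasure (iid_sum ?G' k) {s. t < real (s + min x U)} \<partial>G)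
      = emeasure (iid_sum ?G' (Suc k)) {s. t < real s}"
    unfolding emeasure_iid_Suc by simp
  finally show ?case by (simp add: algebra_simps ring_distribs)
qed


lemma exp_convex_bound:
  fixes l x U :: real
  assumes "0 \<le> x" "x \<le> U" "0 < U"
  shows "exp (l * x) \<le> 1 + (exp (l * U) - 1) * x / U"
proof -
  have "exp ((1 - x/U) *\<^sub>R 0 + (x/U) *\<^sub>R (l*U)) \<le> (1 - x/U) * exp 0 + (x/U) * exp (l*U)"
    by (rule convex_onD[OF exp_convex]) (use assms in auto)
  moreover have "(1 - x/U) *\<^sub>R 0 + (x/U) *\<^sub>R (l*U) = l * x" using assms by simp
  ultimately have "exp (l * x) \<le> (1 - x/U) + (x/U) * exp (l*U)" by simp
  also have "\<dots> = 1 + (exp (l * U) - 1) * x / U" by (simp add: algebra_simps diff_divide_distrib)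
  finally show ?thesis .
qed

lemma one_step_exp:
  fixes U :: nat and l \<mu> :: real
  assumes "\<forall>x\<in>set_pmf G'. x \<le> U" "U \<ge> 1" "(\<integral>\<^sup>+x. ennreal (real x) \<partial>G') \<le> ennreal \<mu>" "l \<ge> 0" "\<mu> \<ge> 0"
  shows "(\<integral>\<^sup>+x. ennreal (exp (l * real x)) \<partial>G') \<le> ennreal (exp ((exp (l * real U) - 1) * \<mu> / real U))"
proof -
  define a where "a = (exp (l * real U) - 1) / real U"
  have a0: "a \<ge> 0" unfolding a_def using assms by auto
  have "(\<integral>\<^sup>+x. ennreal (exp (l * real x)) \<partial>G') \<le> (\<integral>\<^sup>+x. ennreal 1 + ennreal a * ennreal (real x) \<partial>G')"
  proof (rule nn_integral_mono_AE)
    show "AE x in measure_pmf G'. ennreal (exp (l * real x)) \<le> ennreal 1 + ennreal a * ennreal (real x)"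
      unfolding AE_measure_pmf_iff
    proof
      fix x assume "x \<in> set_pmf G'"
      then have "real x \<le> real U" using assms(1) by auto
      then have "exp (l * real x) \<le> 1 + a * real x"
        using exp_convex_bound[of "real x" "real U" l] assms(2) unfolding a_def by (auto simp: field_simps)
      then have "ennreal (exp (l * real x)) \<le> ennreal (1 + a * real x)" by (rule ennreal_leI)
      then show "ennreal (exp (l * real x)) \<le> ennreal 1 + ennreal a * ennreal (real x)"
        using a0 by (simp add: ennreal_plus ennreal_mult)
    qed
  qed
  also have "\<dots> = ennreal 1 + ennreal a * (\<integral>\<^sup>+x. ennreal (real x) \<partial>G')"
    by (simp add: nn_integral_add nn_integral_cmult measure_pmf.emeasure_space_1)
  also have "\<dots> \<le> ennreal 1 + ennreal a * ennreal \<mu>"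
    by (intro add_left_mono mult_left_mono assms(3)) auto
  also have "\<dots> \<le> ennreal (exp (a * \<mu>))"
  proof -
    have True: "\<mu> \<ge> 0" using assms by simp
    have "ennreal (1 + a * \<mu>) \<le> ennreal (exp (a * \<mu>))"
      by (rule ennreal_leI) (simp add: exp_ge_add_one_self add.commute)
    then show ?thesis using a0 True by (simp add: ennreal_plus ennreal_mult)
  qed
  finally show ?thesis unfolding a_def by (simp add: field_simps)
qed

lemma chernoff_trunc:
  fixes U :: nat and l \<mu> :: real
  assumes "\<forall>x\<in>set_pmf G'. x \<le> U" "U \<ge> 1" "(\<integral>\<^sup>+x. ennreal (real x) \<partial>G') \<le> ennreal \<mu>" "l \<ge> 0" "\<mu> \<ge> 0"
  shows "emeasure (iid_sum G' k) {s. t < real s} \<le> ennreal (exp (real k * ((exp (l * real U) - 1) * \<mu> / real U) - l * t))"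
proof -
  have "emeasure (iid_sum G' k) {s. t < real s} = (\<integral>\<^sup>+s. indicator {s. t < real s} s \<partial>iid_sum G' k)"
    by simp
  also have "\<dots> \<le> (\<integral>\<^sup>+s. ennreal (exp (- l * t)) * ennreal (exp (l * real s)) \<partial>iid_sum G' k)"
  proof (rule nn_integral_mono)
    fix s :: nat
    show "indicator {s. t < real s} s \<le> ennreal (exp (- l * t)) * ennreal (exp (l * real s))"
    proof (cases "t < real s")
      case True
      then have "l * t \<le> l * real s" using assms(4) by (simp add: mult_left_mono)
      then have "1 \<le> exp (- l * t) * exp (l * real s)" by (simp add: exp_add[symmetric])
      then show ?thesis using True by (simp add: ennreal_mult[symmetric])
    qed simp
  qed
  also have "\<dots> = ennreal (exp (- l * t)) * (\<integral>\<^sup>+x. ennreal (exp (l * real x)) \<partial>G') ^ k"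
    by (simp add: nn_integral_cmult iid_sum_exp)
  also have "\<dots> \<le> ennreal (exp (- l * t)) * ennreal (exp ((exp (l * real U) - 1) * \<mu> / real U)) ^ k"
    by (intro mult_left_mono power_mono one_step_exp assms) auto
  also have "\<dots> = ennreal (exp (real k * ((exp (l * real U) - 1) * \<mu> / real U) - l * t))"
    by (simp add: ennreal_power ennreal_mult[symmetric] exp_add[symmetric] exp_of_nat_mult[symmetric])
  finally show ?thesis .
qed


lemma iid_sum_set_bound:
  assumes "\<forall>x\<in>set_pmf G. x \<le> U"
  shows "v \<in> set_pmf (iid_sum G k) \<Longrightarrow> v \<le> k * U"
proof (induction k arbitrary: v)
  case 0 then show ?case by simp
next
  case (Suc k)
  then obtain a b where "a \<in> set_pmf (iid_sum G k)" "b \<in> set_pmf G" "v = a + b" by auto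
  then show ?case using Suc.IH assms by fastforce
qed

lemma tail_sum_bound:
  fixes s \<mu> :: real and r k :: nat and G :: "nat pmf"
  assumes mu: "(\<integral>\<^sup>+x. ennreal (real x) \<partial>G) \<le> ennreal \<mu>" "\<mu> > 0" and s: "s > 0" and r: "r \<ge> 1"
  shows "emeasure (iid_sum G k) {v. s < real v} \<le> of_nat k * emeasure G {x. s / real r < real x}
           + ennreal ((exp 1 * real k * \<mu> / s) ^ r)"
proof -
  define U where "U = nat \<lfloor>s / real r\<rfloor>"
  let ?G' = "map_pmf (\<lambda>x. min x U) G"
  have sr: "s / real r \<ge> 0" using s by simp
  have UU: "{x. U < x} = {x. s / real r < real x}"
  proof -
    have "U < x \<longleftrightarrow> s / real r < real x" for x
      unfolding U_def using sr by (simp add: nat_less_iff floor_less_iff)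
    then show ?thesis by auto
  qed
  have Ule: "real U \<le> s / real r" unfolding U_def using sr by (simp add: of_nat_floor)
  have bd: "\<forall>x\<in>set_pmf ?G'. x \<le> U" by auto
  have mu': "(\<integral>\<^sup>+x. ennreal (real x) \<partial>?G') \<le> ennreal \<mu>"
  proof -
    have "(\<integral>\<^sup>+x. ennreal (real x) \<partial>?G') = (\<integral>\<^sup>+x. ennreal (real (min x U)) \<partial>G)" by simp
    also have "\<dots> \<le> (\<integral>\<^sup>+x. ennreal (real x) \<partial>G)" by (intro nn_integral_mono) auto
    finally show ?thesis using mu by simp
  qed
  have main: "emeasure (iid_sum ?G' k) {v. s < real v} \<le> ennreal ((exp 1 * real k * \<mu> / s) ^ r)"
  proof (cases "U = 0 \<or> k = 0")
    case True
    have "{v. s < real v} \<inter> set_pmf (iid_sum ?G' k) = {}"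
      using iid_sum_set_bound[OF bd, of _ k] True s by fastforce
    then have "emeasure (iid_sum ?G' k) {v. s < real v} = 0"
      by (meson in_null_sets_measure_pmfI null_setsD1)
    then show ?thesis by simp
  next
    case False
    then have U1: "U \<ge> 1" and k1: "k \<ge> 1" by auto
    show ?thesis
    proof (cases "exp 1 * real k * \<mu> / s \<ge> 1")
      case True
      have "emeasure (iid_sum ?G' k) {v. s < real v} \<le> 1" by (simp add: measure_pmf.emeasure_le_1)
      also have "1 \<le> ennreal ((exp 1 * real k * \<mu> / s) ^ r)" using True by (simp add: one_le_power)
      finally show ?thesis .
    next
      case False
      define q where "q = exp 1 * real k * \<mu> / s"
      have q0: "q > 0" "q < 1" unfolding q_def using False k1 mu s by auto
      have kmu: "real k * \<mu> > 0" using k1 mu by simp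
      define l where "l = ln (s / (real k * \<mu>)) / U"
      have ratio: "s / (real k * \<mu>) > 1"
      proof -
        have "exp 1 * (real k * \<mu>) < s" using False s unfolding q_def by (simp add: field_simps)
        moreover have "k * \<mu> < exp 1 * (real k * \<mu>)" using kmu mult_strict_right_mono[of 1 "exp 1" "real k * \<mu>"] by simp
        ultimately show ?thesis using kmu by (simp add: field_simps)
      qed
      have l0: "l \<ge> 0" unfolding l_def using ratio U1 by simp
      have elU: "exp (l * real U) = s / (real k * \<mu>)" unfolding l_def using U1 ratio by simp
      note ch = chernoff_trunc[OF bd U1 mu' l0 less_imp_le[OF mu(2)], of k s]
      have "real k * ((exp (l * real U) - 1) * \<mu> / real U) - l * s
          = (s - real k * \<mu>) / U - (s / real U) * ln (s / (real k * \<mu>))"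
        unfolding elU using kmu U1 k1 mu(2) by (simp add: field_simps l_def)
      also have "\<dots> \<le> (s / real U) * (1 - ln (s / (real k * \<mu>)))"
        using kmu U1 k1 mu(2) by (simp add: field_simps)
      also have "1 - ln (s / (real k * \<mu>)) = ln q"
        unfolding q_def using kmu s k1 mu(2) by (simp add: ln_div ln_mult)
      also have "(s / real U) * ln q \<le> real r * ln q"
      proof -
        have "real r \<le> s / real U" using Ule U1 r s by (simp add: field_simps)
        moreover have "ln q < 0" using q0 by simp
        ultimately show ?thesis using mult_right_mono_neg[of "real r" "s / real U" "ln q"] by (simp add: mult.commute)
      qed
      finally have "exp (real k * ((exp (l * real U) - 1) * \<mu> / real U) - l * s) \<le> exp (real r * ln q)"
        by simp
      also have "exp (real r * ln q) = q ^ r" using q0 by (simp add: exp_of_nat_mult)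
      finally show ?thesis using ch unfolding q_def
        by (meson ennreal_leI order_trans)
    qed
  qed
  show ?thesis using iid_sum_trunc[of G k s U] main UU
    by (metis (no_types, lifting) add_left_mono order_trans)
qed


lemma geom_le2:
  fixes q :: real assumes "0 \<le> q" "q \<le> 1/2"
  shows "(\<Sum>j<J. q ^ j) \<le> 2 - 2 * q ^ J"
proof (induction J)
  case 0 then show ?case by simp
next
  case (Suc J)
  have "q ^ J * (2 * q) \<le> q ^ J * 1" using assms by (intro mult_left_mono) auto
  then show ?case using Suc by (simp add: algebra_simps)
qed

lemma dom_iter:
  fixes T :: "real \<Rightarrow> real"
  assumes "\<forall>x. T (x / 2) \<le> C * T x" "C \<ge> 0"
  shows "T (L / 2 ^ j) \<le> C ^ j * T L"
proof (induction j)
  case 0 then show ?case by simp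
next
  case (Suc j)
  have "T (L / 2 ^ Suc j) = T ((L / 2 ^ j) / 2)" by (simp add: field_simps)
  also have "\<dots> \<le> C * T (L / 2 ^ j)" using assms(1) by blast
  also have "\<dots> \<le> C * (C ^ j * T L)" using Suc assms(2) by (intro mult_left_mono) auto
  finally show ?case by simp
qed

lemma dyadic_pointwise:
  fixes L :: real and k r J :: nat
  assumes "L / 2 ^ J < 1" "r \<ge> 1" "L > 0"
  shows "(real k) ^ r * indicator {k. real k \<le> L} k
     \<le> (\<Sum>j<J. (L / 2 ^ j) ^ r * indicator {k. L / 2 ^ Suc j < real k} k)"
proof (cases "k \<ge> 1 \<and> real k \<le> L")
  case False
  have "0 \<le> (\<Sum>j<J. (L / 2 ^ j) ^ r * indicator {k. L / 2 ^ Suc j < real k} k)"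
    using assms(3) by (intro sum_nonneg) auto
  moreover have "(real k) ^ r * indicator {k. real k \<le> L} k = 0"
    using False assms(2) by (cases "k = 0") (auto simp: indicator_def)
  ultimately show ?thesis by linarith
next
  case True
  define S where "S = {j. j < J \<and> real k \<le> L / 2 ^ j}"
  have J0: "J > 0"
  proof (rule ccontr)
    assume "\<not> J > 0" then have "J = 0" by simp
    then show False using assms(1) True by simp
  qed
  have "0 \<in> S" unfolding S_def using J0 True by simp
  have fS: "finite S" unfolding S_def by simp
  define j0 where "j0 = Max S"
  have j0S: "j0 \<in> S" unfolding j0_def using fS \<open>0 \<in> S\<close> by (intro Max_in) auto
  have j0J: "j0 < J" and kle: "real k \<le> L / 2 ^ j0" using j0S unfolding S_def by auto
  have kgt: "L / 2 ^ Suc j0 < real k"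
  proof (cases "Suc j0 < J")
    case True
    have "Suc j0 \<notin> S" using Max_ge[OF fS, of "Suc j0"] unfolding j0_def[symmetric] by auto
    then show ?thesis using True unfolding S_def by auto
  next
    case False
    then have "Suc j0 = J" using j0J by simp
    then have "L / 2 ^ Suc j0 < 1" using assms(1) by simp
    moreover have "(1::real) \<le> real k" using \<open>k \<ge> 1 \<and> real k \<le> L\<close> by simp
    ultimately show ?thesis by linarith
  qed
  have "(real k) ^ r * indicator {k. real k \<le> L} k = (real k) ^ r" using True by simp
  also have "\<dots> \<le> (L / 2 ^ j0) ^ r" using kle by (intro power_mono) auto
  also have "\<dots> = (L / 2 ^ j0) ^ r * indicator {k. L / 2 ^ Suc j0 < real k} k" using kgt by simp
  also have "\<dots> \<le> (\<Sum>j<J. (L / 2 ^ j) ^ r * indicator {k. L / 2 ^ Suc j < real k} k)"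
    using j0J assms(3) by (intro member_le_sum) auto
  finally show ?thesis .
qed

lemma trunc_moment:
  fixes N :: "nat pmf" and T :: "real \<Rightarrow> real" and L C K :: real and r :: nat
  assumes dom: "\<forall>x. T (x / 2) \<le> C * T x" and C1: "C \<ge> 1" and T0: "\<forall>x. T x \<ge> 0"
    and tail: "\<forall>t. emeasure N {k. t < real k} \<le> ennreal (K * T t)" and K0: "K \<ge> 0"
    and r: "r \<ge> 1" "2 * C \<le> 2 ^ r" and L: "L > 0"
  shows "(\<integral>\<^sup>+k. ennreal ((real k) ^ r * indicator {k. real k \<le> L} k) \<partial>N) \<le> ennreal (2 * C * K * L ^ r * T L)"
proof -
  obtain J :: nat where J: "L / 2 ^ J < 1"
  proof -
    obtain J where "L < 2 ^ J" using real_arch_pow[of 2 L] by auto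
    then show ?thesis using that[of J] by (simp add: field_simps)
  qed
  define q where "q = C / 2 ^ r"
  have q: "0 \<le> q" "q \<le> 1/2" unfolding q_def using C1 r by (auto simp: field_simps)
  have "(\<integral>\<^sup>+k. ennreal ((real k) ^ r * indicator {k. real k \<le> L} k) \<partial>N)
     \<le> (\<integral>\<^sup>+k. (\<Sum>j<J. ennreal ((L / 2 ^ j) ^ r) * indicator {k. L / 2 ^ Suc j < real k} k) \<partial>N)"
  proof (rule nn_integral_mono)
    fix k
    have "ennreal ((real k) ^ r * indicator {k. real k \<le> L} k)
      \<le> ennreal (\<Sum>j<J. (L / 2 ^ j) ^ r * indicator {k. L / 2 ^ Suc j < real k} k)"
      by (rule ennreal_leI, rule dyadic_pointwise[OF J r(1) L])
    also have "\<dots> = (\<Sum>j<J. ennreal ((L / 2 ^ j) ^ r) * indicator {k. L / 2 ^ Suc j < real k} k)"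
      using L by (subst sum_ennreal[symmetric]) (auto simp: indicator_def)
    finally show "ennreal ((real k) ^ r * indicator {k. real k \<le> L} k)
      \<le> (\<Sum>j<J. ennreal ((L / 2 ^ j) ^ r) * indicator {k. L / 2 ^ Suc j < real k} k)" .
  qed
  also have "\<dots> = (\<Sum>j<J. ennreal ((L / 2 ^ j) ^ r) * emeasure N {k. L / 2 ^ Suc j < real k})"
    apply (subst nn_integral_sum, simp)
    apply (intro sum.cong refl)
    apply (subst nn_integral_cmult, simp)
    apply (subst nn_integral_indicator, simp)
    by simp
  also have "\<dots> \<le> (\<Sum>j<J. ennreal ((L / 2 ^ j) ^ r * (K * (C ^ Suc j * T L))))"
  proof (intro sum_mono)
    fix j
    have "emeasure N {k. L / 2 ^ Suc j < real k} \<le> ennreal (K * T (L / 2 ^ Suc j))" using tail by blast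
    also have "\<dots> \<le> ennreal (K * (C ^ Suc j * T L))"
      using dom_iter[OF dom, of L "Suc j"] C1 K0 by (intro ennreal_leI mult_left_mono) auto
    finally show "ennreal ((L / 2 ^ j) ^ r) * emeasure N {k. L / 2 ^ Suc j < real k}
        \<le> ennreal ((L / 2 ^ j) ^ r * (K * (C ^ Suc j * T L)))"
      using L C1 K0 T0 by (subst ennreal_mult) (auto intro: mult_left_mono)
  qed
  also have "\<dots> = ennreal (\<Sum>j<J. (L / 2 ^ j) ^ r * (K * (C ^ Suc j * T L)))"
    using L C1 K0 T0 by (subst sum_ennreal) auto
  also have "\<dots> \<le> ennreal (2 * C * K * L ^ r * T L)"
  proof (rule ennreal_leI)
    have g2: "(\<Sum>j<J. q ^ j) \<le> 2" using geom_le2[OF q, of J] zero_le_power[OF q(1), of J] by linarith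
    have "(\<Sum>j<J. (L / 2 ^ j) ^ r * (K * (C ^ Suc j * T L))) = C * K * L ^ r * T L * (\<Sum>j<J. q ^ j)"
      unfolding q_def by (simp add: sum_distrib_left power_divide power_mult_distrib field_simps flip: power_mult)
    also have "\<dots> \<le> C * K * L ^ r * T L * 2"
      using g2 q C1 K0 L T0 by (intro mult_left_mono) (auto simp: zero_le_mult_iff)
    finally show "(\<Sum>j<J. (L / 2 ^ j) ^ r * (K * (C ^ Suc j * T L))) \<le> 2 * C * K * L ^ r * T L"
      by (simp add: mult_ac)
  qed
  finally show ?thesis .
qed


lemma random_sum_tail:
  fixes N G :: "nat pmf" and T :: "real \<Rightarrow> real" and C K \<mu>N \<mu> s :: real and r :: nat
  assumes dom: "\<forall>x. T (x / 2) \<le> C * T x" and C1: "C \<ge> 1" and T0: "\<forall>x. T x \<ge> 0"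
    and tail: "\<forall>t. emeasure N {k. t < real k} \<le> ennreal (K * T t)" and K0: "K \<ge> 0"
    and r: "r \<ge> 1" "2 * C \<le> 2 ^ r"
    and meanN: "(\<integral>\<^sup>+k. ennreal (real k) \<partial>N) \<le> ennreal \<mu>N"
    and meanG: "(\<integral>\<^sup>+x. ennreal (real x) \<partial>G) \<le> ennreal \<mu>" "\<mu> > 0" and s: "s > 0"
  shows "emeasure (bind_pmf N (iid_sum G)) {v. s < real v}
     \<le> ennreal (K * (1 + 2 * C * exp 1 ^ r) * T (s / \<mu>)) + ennreal \<mu>N * emeasure G {x. s / real r < real x}"
proof -
  define L where "L = s / \<mu>"
  have L: "L > 0" unfolding L_def using s meanG by simp
  let ?P = "emeasure G {x. s / real r < real x}"
  define a where "a = (exp 1 * \<mu> / s) ^ r"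
  have a0: "a \<ge> 0" unfolding a_def using s meanG by simp
  have pw: "emeasure (iid_sum G k) {v. s < real v} \<le> indicator {k. L < real k} k
      + (ennreal (real k) * ?P + ennreal a * ennreal ((real k) ^ r * indicator {k. real k \<le> L} k))" for k
  proof (cases "L < real k")
    case True
    have "emeasure (iid_sum G k) {v. s < real v} \<le> 1" by (simp add: measure_pmf.emeasure_le_1)
    then show ?thesis using True by (simp add: add_increasing2)
  next
    case False
    have "emeasure (iid_sum G k) {v. s < real v} \<le> of_nat k * ?P + ennreal ((exp 1 * real k * \<mu> / s) ^ r)"
      by (rule tail_sum_bound[OF meanG s r(1)])
    also have "(exp 1 * real k * \<mu> / s) ^ r = a * ((real k) ^ r * indicator {k. real k \<le> L} k)"
    proof -
      have i1: "indicator {k. real k \<le> L} k = (1::real)" using False by simp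
      have "exp 1 * real k * \<mu> / s = (exp 1 * \<mu> / s) * real k" by simp
      then show ?thesis unfolding a_def i1 by (simp only: power_mult_distrib mult_1_right)
    qed
    also have "ennreal (a * ((real k) ^ r * indicator {k. real k \<le> L} k)) = ennreal a * ennreal ((real k) ^ r * indicator {k. real k \<le> L} k)"
      by (rule ennreal_mult'[OF a0])
    also have "(of_nat k :: ennreal) = ennreal (real k)" by (simp add: ennreal_of_nat_eq_real_of_nat)
    finally show ?thesis using False by simp
  qed
  have "emeasure (bind_pmf N (iid_sum G)) {v. s < real v} = (\<integral>\<^sup>+k. emeasure (iid_sum G k) {v. s < real v} \<partial>N)"
    by simp
  also have "\<dots> \<le> (\<integral>\<^sup>+k. indicator {k. L < real k} k
      + (ennreal (real k) * ?P + ennreal a * ennreal ((real k) ^ r * indicator {k. real k \<le> L} k)) \<partial>N)"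
    by (intro nn_integral_mono pw)
  also have "\<dots> = emeasure N {k. L < real k} + ((\<integral>\<^sup>+k. ennreal (real k) \<partial>N) * ?P
      + ennreal a * (\<integral>\<^sup>+k. ennreal ((real k) ^ r * indicator {k. real k \<le> L} k) \<partial>N))"
    by (simp add: nn_integral_add nn_integral_cmult nn_integral_multc)
  also have "\<dots> \<le> ennreal (K * T L) + (ennreal \<mu>N * ?P + ennreal a * ennreal (2 * C * K * L ^ r * T L))"
    using tail trunc_moment[OF dom C1 T0 tail K0 r L]
    by (intro add_mono mult_right_mono mult_left_mono meanN) auto
  also have "ennreal a * ennreal (2 * C * K * L ^ r * T L) = ennreal (2 * C * K * exp 1 ^ r * T L)"
  proof -
    have "a * L ^ r = exp 1 ^ r" unfolding a_def L_def using s meanG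
    proof -
      have "exp 1 * \<mu> / s * (s / \<mu>) = exp 1" using s meanG by simp
      then show "(exp 1 * \<mu> / s) ^ r * (s / \<mu>) ^ r = exp 1 ^ r" by (metis power_mult_distrib)
    qed
    then have e: "a * (2 * C * K * L ^ r * T L) = 2 * C * K * exp 1 ^ r * T L" by (simp add: mult_ac)
    show ?thesis by (subst ennreal_mult'[OF a0, symmetric]) (simp only: e)
  qed
  also have "ennreal (K * T L) + (ennreal \<mu>N * ?P + ennreal (2 * C * K * exp 1 ^ r * T L))
      = ennreal (K * (1 + 2 * C * exp 1 ^ r) * T L) + ennreal \<mu>N * ?P"
  proof -
    have p1: "K * T L \<ge> 0" using K0 T0 by simp
    have p2: "2 * C * K * exp 1 ^ r * T L \<ge> 0" using K0 T0 C1 by simp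
    have "ennreal (K * T L) + ennreal (2 * C * K * exp 1 ^ r * T L) = ennreal (K * (1 + 2 * C * exp 1 ^ r) * T L)"
      using p1 p2 by (subst ennreal_plus[symmetric]) (auto simp: algebra_simps)
    moreover have "ennreal (K * T L) + (ennreal \<mu>N * ?P + ennreal (2 * C * K * exp 1 ^ r * T L))
       = (ennreal (K * T L) + ennreal (2 * C * K * exp 1 ^ r * T L)) + ennreal \<mu>N * ?P"
      by (simp only: add_ac)
    ultimately show ?thesis by simp
  qed
  finally show ?thesis unfolding L_def .
qed


lemma iid_sum_add:
  "iid_sum G (a + b) = bind_pmf (iid_sum G a) (\<lambda>s. map_pmf (\<lambda>t. s + t) (iid_sum G b))"
proof (induction b)
  case 0
  then show ?case by (simp add: bind_return_pmf')
next
  case (Suc b)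
  have "iid_sum G (a + Suc b) = bind_pmf (iid_sum G (a + b)) (\<lambda>u. map_pmf (\<lambda>x. u + x) G)" by simp
  also have "\<dots> = bind_pmf (iid_sum G a) (\<lambda>s. bind_pmf (map_pmf (\<lambda>t. s + t) (iid_sum G b)) (\<lambda>u. map_pmf (\<lambda>x. u + x) G))"
    unfolding Suc by (simp add: bind_assoc_pmf)
  also have "\<dots> = bind_pmf (iid_sum G a) (\<lambda>s. map_pmf (\<lambda>t. s + t) (iid_sum G (Suc b)))"
    by (simp add: bind_map_pmf map_bind_pmf pmf.map_comp o_def add.assoc[symmetric])
  finally show ?case .
qed

lemma iid_sum_bind:
  "bind_pmf (iid_sum G k) (iid_sum F) = iid_sum (bind_pmf G (iid_sum F)) k"
proof (induction k)
  case 0 then show ?case by (simp add: bind_return_pmf)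
next
  case (Suc k)
  have "bind_pmf (iid_sum G (Suc k)) (iid_sum F)
      = bind_pmf (iid_sum G k) (\<lambda>s. bind_pmf G (\<lambda>x. bind_pmf (iid_sum F s) (\<lambda>a. map_pmf (\<lambda>t. a + t) (iid_sum F x))))"
    by (simp add: bind_assoc_pmf bind_map_pmf iid_sum_add)
  also have "\<dots> = bind_pmf (iid_sum G k) (\<lambda>s. bind_pmf (iid_sum F s) (\<lambda>a. bind_pmf G (\<lambda>x. map_pmf (\<lambda>t. a + t) (iid_sum F x))))"
    by (subst bind_commute_pmf) simp
  also have "\<dots> = iid_sum (bind_pmf G (iid_sum F)) (Suc k)"
    by (simp add: Suc[symmetric] bind_assoc_pmf map_bind_pmf)
  finally show ?case .
qed

lemma iid_sum_return1: "iid_sum (return_pmf 1) k = return_pmf k"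
  by (induction k) (simp_all add: bind_return_pmf)

lemma iid_sum_return1': "iid_sum (return_pmf (Suc 0)) k = return_pmf k"
  using iid_sum_return1 by simp

lemma gw_add: "gw F (N + n) = bind_pmf (gw F N) (iid_sum (gw F n))"
proof (induction n)
  case 0 then show ?case by (simp add: iid_sum_return1' bind_return_pmf')
next
  case (Suc n)
  have "gw F (N + Suc n) = bind_pmf (gw F (N + n)) (iid_sum F)" by simp
  also have "\<dots> = bind_pmf (gw F N) (\<lambda>k. bind_pmf (iid_sum (gw F n) k) (iid_sum F))"
    unfolding Suc by (simp add: bind_assoc_pmf)
  also have "\<dots> = bind_pmf (gw F N) (iid_sum (gw F (Suc n)))"
    by (simp add: iid_sum_bind)
  finally show ?case .
qed

lemma iid_sum_mean:
  "(\<integral>\<^sup>+v. ennreal (real v) \<partial>iid_sum G k) = of_nat k * (\<integral>\<^sup>+x. ennreal (real x) \<partial>G)"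
proof (induction k)
  case 0 then show ?case by simp
next
  case (Suc k)
  have "(\<integral>\<^sup>+v. ennreal (real v) \<partial>iid_sum G (Suc k))
     = (\<integral>\<^sup>+s. (\<integral>\<^sup>+x. ennreal (real s) + ennreal (real x) \<partial>G) \<partial>iid_sum G k)"
    by (simp add: ennreal_plus)
  also have "\<dots> = (\<integral>\<^sup>+s. ennreal (real s) + (\<integral>\<^sup>+x. ennreal (real x) \<partial>G) \<partial>iid_sum G k)"
    by (simp add: nn_integral_add measure_pmf.emeasure_space_1)
  also have "\<dots> = (\<integral>\<^sup>+s. ennreal (real s) \<partial>iid_sum G k) + (\<integral>\<^sup>+x. ennreal (real x) \<partial>G)"
    by (simp add: nn_integral_add measure_pmf.emeasure_space_1)
  finally show ?case using Suc by (simp add: algebra_simps)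
qed

lemma gw_mean:
  fixes F :: "nat pmf" and m :: real
  assumes "(\<integral>\<^sup>+x. ennreal (real x) \<partial>F) = ennreal m" "m \<ge> 0"
  shows "(\<integral>\<^sup>+v. ennreal (real v) \<partial>gw F n) = ennreal (m ^ n)"
proof (induction n)
  case 0 then show ?case by simp
next
  case (Suc n)
  have "(\<integral>\<^sup>+v. ennreal (real v) \<partial>gw F (Suc n)) = (\<integral>\<^sup>+k. of_nat k * ennreal m \<partial>gw F n)"
    by (simp add: iid_sum_mean assms(1))
  also have "\<dots> = (\<integral>\<^sup>+k. ennreal (real k) \<partial>gw F n) * ennreal m"
    by (simp add: nn_integral_multc ennreal_of_nat_eq_real_of_nat)
  also have "\<dots> = ennreal (m ^ Suc n)" using Suc assms(2) by (simp add: ennreal_mult' mult.commute)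
  finally show ?case .
qed


lemma Fbar_emeasure: "emeasure (measure_pmf F) {k. x < real k} = ennreal (Fbar F x)"
  unfolding Fbar_def by (simp add: measure_pmf.emeasure_eq_measure)

lemma Fbar_mono: "x \<le> y \<Longrightarrow> Fbar F y \<le> Fbar F x"
  unfolding Fbar_def by (intro measure_pmf.finite_measure_mono) auto

lemma Fbar_nonneg: "Fbar F x \<ge> 0"
  unfolding Fbar_def by simp

lemma Fbar_le1: "Fbar F x \<le> 1"
  unfolding Fbar_def by simp

lemma Fbar_pos1:
  assumes "integrable (measure_pmf F) real" "offspring_mean F > 1"
  shows "Fbar F 1 > 0"
proof (rule ccontr)
  assume "\<not> Fbar F 1 > 0"
  then have "Fbar F 1 = 0" using Fbar_nonneg[of F 1] by linarith
  then have "measure_pmf.prob F {k. 1 < real k} = 0" unfolding Fbar_def .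
  then have "set_pmf F \<inter> {k. 1 < real k} = {}" by (simp add: measure_pmf_zero_iff)
  then have ae: "AE k in measure_pmf F. real k \<le> 1"
    unfolding AE_measure_pmf_iff by force
  have "offspring_mean F \<le> measure_pmf.expectation F (\<lambda>_. 1::real)"
    unfolding offspring_mean_def by (rule integral_mono_AE[OF assms(1) _ ae]) simp
  then show False using assms(2) by simp
qed

lemma small_t:
  assumes "Fbar F 1 > 0" "t \<le> 1"
  shows "1 \<le> (1 / Fbar F 1) * Fbar F t"
  using Fbar_mono[OF assms(2), of F] assms(1) by (simp add: field_simps)

lemma tail_consts:
  fixes F :: "nat pmf" and C m :: real and r :: nat
  assumes dom: "\<forall>x. Fbar F (x / 2) \<le> C * Fbar F x" and C1: "C \<ge> 1"
    and r: "r \<ge> 1" "2 * C \<le> 2 ^ r"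
    and mean: "(\<integral>\<^sup>+x. ennreal (real x) \<partial>F) = ennreal m" "m > 0"
    and T1: "Fbar F 1 > 0"
  shows "\<exists>K\<ge>0. \<forall>t. emeasure (gw F n) {k. t < real k} \<le> ennreal (K * Fbar F t)"
proof (induction n)
  case 0
  show ?case
  proof (intro exI[of _ "1 / Fbar F 1"] conjI allI)
    show "0 \<le> 1 / Fbar F 1" using T1 by simp
    fix t :: real
    show "emeasure (gw F 0) {k. t < real k} \<le> ennreal (1 / Fbar F 1 * Fbar F t)"
    proof (cases "t < 1")
      case True
      then have "1 \<le> 1 / Fbar F 1 * Fbar F t" using small_t[OF T1, of t] by simp
      then show ?thesis using True by (simp add: ennreal_leI[of 1, simplified])
    qed simp
  qed
next
  case (Suc n)
  then obtain K where K0: "K \<ge> 0" and K: "\<forall>t. emeasure (gw F n) {k. t < real k} \<le> ennreal (K * Fbar F t)"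
    by auto
  obtain j :: nat where j: "m \<le> 2 ^ j"
    using real_arch_pow[of 2 m] by (auto intro: less_imp_le)
  define K' where "K' = max (1 / Fbar F 1) (K * (1 + 2 * C * exp 1 ^ r) * C ^ j + m ^ n * C ^ r)"
  have K'0: "K' \<ge> 0" unfolding K'_def using T1 by (intro max.coboundedI1) simp
  show ?case
  proof (intro exI[of _ K'] conjI allI K'0)
    fix t :: real
    show "emeasure (gw F (Suc n)) {k. t < real k} \<le> ennreal (K' * Fbar F t)"
    proof (cases "t > 0")
      case False
      have "emeasure (gw F (Suc n)) {k. t < real k} \<le> 1" by (simp only: measure_pmf.emeasure_le_1)
      also have "1 \<le> ennreal (K' * Fbar F t)"
      proof -
        have "1 \<le> (1 / Fbar F 1) * Fbar F t" using small_t[OF T1, of t] False by simp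
        also have "\<dots> \<le> K' * Fbar F t" unfolding K'_def by (intro mult_right_mono Fbar_nonneg) simp
        finally show ?thesis using ennreal_leI by fastforce
      qed
      finally show ?thesis .
    next
      case True
      have mn: "(\<integral>\<^sup>+k. ennreal (real k) \<partial>gw F n) \<le> ennreal (m ^ n)"
        using gw_mean[OF mean(1)] mean(2) by simp
      have "emeasure (gw F (Suc n)) {k. t < real k}
          \<le> ennreal (K * (1 + 2 * C * exp 1 ^ r) * Fbar F (t / m)) + ennreal (m ^ n) * emeasure F {x. t / real r < real x}"
        unfolding gw.simps
        by (rule random_sum_tail[OF dom C1 _ K K0 r mn _ mean(2) True])
           (auto simp: Fbar_nonneg mean(1))
      also have "\<dots> = ennreal (K * (1 + 2 * C * exp 1 ^ r) * Fbar F (t / m) + m ^ n * Fbar F (t / real r))"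
        using K0 C1 mean(2) by (simp add: Fbar_emeasure Fbar_nonneg ennreal_plus ennreal_mult')
      also have "\<dots> \<le> ennreal (K' * Fbar F t)"
      proof (rule ennreal_leI)
        have a: "Fbar F (t / m) \<le> C ^ j * Fbar F t"
        proof -
          have "t / 2 ^ j \<le> t / m" using True j mean(2) by (intro divide_left_mono) auto
          then have "Fbar F (t / m) \<le> Fbar F (t / 2 ^ j)" by (rule Fbar_mono)
          also have "\<dots> \<le> C ^ j * Fbar F t" using dom_iter[OF dom] C1 by simp
          finally show ?thesis .
        qed
        have b: "Fbar F (t / real r) \<le> C ^ r * Fbar F t"
        proof -
          have "real r \<le> 2 ^ r" using of_nat_less_two_power[of r] by simp
          then have "t / 2 ^ r \<le> t / real r" using True r(1) by (intro divide_left_mono) auto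
          then have "Fbar F (t / real r) \<le> Fbar F (t / 2 ^ r)" by (rule Fbar_mono)
          also have "\<dots> \<le> C ^ r * Fbar F t" using dom_iter[OF dom] C1 by simp
          finally show ?thesis .
        qed
        have "K * (1 + 2 * C * exp 1 ^ r) * Fbar F (t / m) + m ^ n * Fbar F (t / real r)
           \<le> K * (1 + 2 * C * exp 1 ^ r) * (C ^ j * Fbar F t) + m ^ n * (C ^ r * Fbar F t)"
          using K0 C1 mean(2) a b by (intro add_mono mult_left_mono) auto
        also have "\<dots> = (K * (1 + 2 * C * exp 1 ^ r) * C ^ j + m ^ n * C ^ r) * Fbar F t"
          by (simp add: algebra_simps)
        also have "\<dots> \<le> K' * Fbar F t" unfolding K'_def by (intro mult_right_mono Fbar_nonneg) simp
        finally show "K * (1 + 2 * C * exp 1 ^ r) * Fbar F (t / m) + m ^ n * Fbar F (t / real r) \<le> K' * Fbar F t" .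
      qed
      finally show ?thesis .
    qed
  qed
qed


lemma tail_consts_upto:
  fixes F :: "nat pmf" and C m :: real and r :: nat
  assumes dom: "\<forall>x. Fbar F (x / 2) \<le> C * Fbar F x" and C1: "C \<ge> 1"
    and r: "r \<ge> 1" "2 * C \<le> 2 ^ r"
    and mean: "(\<integral>\<^sup>+x. ennreal (real x) \<partial>F) = ennreal m" "m > 0"
    and T1: "Fbar F 1 > 0"
  shows "\<exists>K\<ge>0. \<forall>n\<le>N. \<forall>t. emeasure (gw F n) {k. t < real k} \<le> ennreal (K * Fbar F t)"
proof (induction N)
  case 0
  then show ?case using tail_consts[OF assms, of 0] by simp
next
  case (Suc N)
  obtain K1 where K1: "K1 \<ge> 0" "\<forall>n\<le>N. \<forall>t. emeasure (gw F n) {k. t < real k} \<le> ennreal (K1 * Fbar F t)"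
    using Suc by auto
  obtain K2 where K2: "K2 \<ge> 0" "\<forall>t. emeasure (gw F (Suc N)) {k. t < real k} \<le> ennreal (K2 * Fbar F t)"
    using tail_consts[OF assms, of "Suc N"] by auto
  show ?case
  proof (intro exI[of _ "max K1 K2"] conjI allI impI)
    show "0 \<le> max K1 K2" using K1 by simp
    fix n t assume "n \<le> Suc N"
    then consider "n \<le> N" | "n = Suc N" by linarith
    then show "emeasure (gw F n) {k. t < real k} \<le> ennreal (max K1 K2 * Fbar F t)"
    proof cases
      case 1
      then have "emeasure (gw F n) {k. t < real k} \<le> ennreal (K1 * Fbar F t)" using K1 by blast
      also have "\<dots> \<le> ennreal (max K1 K2 * Fbar F t)" by (intro ennreal_leI mult_right_mono Fbar_nonneg) simp
      finally show ?thesis .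
    next
      case 2
      then have "emeasure (gw F n) {k. t < real k} \<le> ennreal (K2 * Fbar F t)" using K2 by blast
      also have "\<dots> \<le> ennreal (max K1 K2 * Fbar F t)" by (intro ennreal_leI mult_right_mono Fbar_nonneg) simp
      finally show ?thesis .
    qed
  qed
qed

theorem corollary2:
  fixes F :: "nat pmf"
  assumes mean_finite: "integrable (measure_pmf F) real"
    and mean_gt1: "offspring_mean F > 1"
    and dominated: "\<exists>C. \<forall>x::real. Fbar F (x / 2) \<le> C * Fbar F x"
    and tail_bound: "\<exists>\<delta>>0. \<exists>c'. \<forall>x y::real. x > 1 \<longrightarrow> y > 1 \<longrightarrow>
                       Fbar F (x * y) \<le> c' * Fbar F x / y powr (1 + \<delta>)"
  shows "\<exists>c. \<forall>(n::nat) (x::real).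
           measure_pmf.prob (gw F n) {k. real k / offspring_mean F ^ n > x} \<le> c * Fbar F x"
proof -
  define T where "T = Fbar F"
  define m where "m = offspring_mean F"
  have m1: "m > 1" using mean_gt1 unfolding m_def .
  have m0: "m > 0" using m1 by simp
  obtain C0 where C0: "\<forall>x::real. T (x / 2) \<le> C0 * T x" using dominated unfolding T_def by blast
  define C where "C = max C0 1"
  have C1: "C \<ge> 1" unfolding C_def by simp
  have dom: "\<forall>x. Fbar F (x / 2) \<le> C * Fbar F x"
  proof
    fix x
    have "T (x / 2) \<le> C0 * T x" using C0 by blast
    also have "\<dots> \<le> C * T x" unfolding C_def T_def by (intro mult_right_mono Fbar_nonneg) simp
    finally show "Fbar F (x / 2) \<le> C * Fbar F x" unfolding T_def .
  qed
  obtain \<delta> c' where \<delta>: "\<delta> > 0" and tb: "\<forall>x y::real. x > 1 \<longrightarrow> y > 1 \<longrightarrow> T (x * y) \<le> c' * T x / y powr (1 + \<delta>)"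
    using tail_bound unfolding T_def by blast
  have mean: "(\<integral>\<^sup>+x. ennreal (real x) \<partial>F) = ennreal m"
    unfolding m_def offspring_mean_def by (rule nn_integral_eq_integral[OF mean_finite]) auto
  have T1: "Fbar F 1 > 0" by (rule Fbar_pos1[OF mean_finite mean_gt1])
  obtain r0 :: nat where "2 * C < 2 ^ r0" using real_arch_pow[of 2 "2 * C"] by auto
  define r where "r = Suc r0"
  have r: "r \<ge> 1" "2 * C \<le> 2 ^ r" unfolding r_def using \<open>2 * C < 2 ^ r0\<close> C1 by auto
  define B where "B = 2 * real r * \<bar>c'\<bar> + 1"
  define Y where "Y = (max 2 B) powr (1 / \<delta>)"
  have Y1: "Y > 1" unfolding Y_def using \<delta> by (intro gr_one_powr) auto
  have YB: "Y powr \<delta> \<ge> B" unfolding Y_def using \<delta> by (simp add: powr_powr)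
  obtain N :: nat where N: "real r * Y < m ^ N" using real_arch_pow[OF m1, of "real r * Y"] by auto
  define y0 where "y0 = m ^ N / real r"
  have y0Y: "y0 > Y" unfolding y0_def using N r by (simp add: field_simps)
  have y01: "y0 > 1" using y0Y Y1 by simp
  have y0d: "y0 powr \<delta> \<ge> B"
  proof -
    have "Y powr \<delta> \<le> y0 powr \<delta>" using y0Y Y1 \<delta> by (intro powr_mono2) auto
    then show ?thesis using YB by simp
  qed
  have N1: "N \<ge> 1"
  proof (rule ccontr)
    assume "\<not> N \<ge> 1" then have "N = 0" by simp
    then have "real r * Y < 1" using N by simp
    moreover have "1 \<le> real r * Y" using r Y1 mult_mono[of 1 "real r" 1 Y] by simp
    ultimately show False by simp
  qed
  obtain K0 where K00: "K0 \<ge> 0" and K0: "\<forall>n\<le>N. \<forall>t. emeasure (gw F n) {k. t < real k} \<le> ennreal (K0 * T t)"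
    using tail_consts_upto[OF dom C1 r mean m0 T1, of N] unfolding T_def by auto
  define A where "A = K0 * (1 + 2 * C * exp 1 ^ r)"
  have A0: "A \<ge> 0" unfolding A_def using K00 C1 by simp
  define c where "c = max (2 * A) (max K0 (1 / T 1))"
  have c0: "c \<ge> 0" unfolding c_def using A0 by simp
  have T0: "\<forall>x. T x \<ge> 0" unfolding T_def by (simp add: Fbar_nonneg)
  have key: "m ^ N * (c' * T x / y0 powr (1 + \<delta>)) \<le> T x / 2" for x
  proof -
    have "y0 powr (1 + \<delta>) = y0 * y0 powr \<delta>" using y01 by (simp add: powr_add)
    moreover have "m ^ N = real r * y0" unfolding y0_def using r by simp
    ultimately have eq: "m ^ N * (c' * T x / y0 powr (1 + \<delta>)) = (real r * c' / y0 powr \<delta>) * T x"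
      using y01 by (simp add: field_simps)
    have pd: "y0 powr \<delta> > 0" using y01 by simp
    have "real r * c' / y0 powr \<delta> \<le> 1 / 2"
    proof (cases "c' \<le> 0")
      case True
      then have "real r * c' \<le> 0" by (simp add: mult_nonneg_nonpos)
      then show ?thesis using pd using divide_nonpos_pos[of "real r * c'" "y0 powr \<delta>"] by linarith
    next
      case False
      then have "2 * (real r * c') \<le> y0 powr \<delta>" using y0d unfolding B_def by simp
      then show ?thesis using pd by (simp add: field_simps)
    qed
    then have "(real r * c' / y0 powr \<delta>) * T x \<le> (1 / 2) * T x" using T0 by (intro mult_right_mono) auto
    then show ?thesis using eq by simp
  qed
  have claim: "\<forall>x. measure_pmf.prob (gw F n) {k. x * m ^ n < real k} \<le> c * T x" for n
  proof (induction n rule: less_induct)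
    case (less n)
    show ?case
    proof
      fix x :: real
      show "measure_pmf.prob (gw F n) {k. x * m ^ n < real k} \<le> c * T x"
      proof (cases "x \<le> 1")
        case True
        have "measure_pmf.prob (gw F n) {k. x * m ^ n < real k} \<le> 1" by simp
        also have "1 \<le> (1 / T 1) * T x" using small_t[OF T1 True] unfolding T_def .
        also have "\<dots> \<le> c * T x" unfolding c_def using T0 by (intro mult_right_mono) auto
        finally show ?thesis .
      next
        case False
        then have x1: "x > 1" by simp
        show ?thesis
        proof (cases "n \<le> N")
          case True
          have "ennreal (measure_pmf.prob (gw F n) {k. x * m ^ n < real k}) \<le> ennreal (K0 * T (x * m ^ n))"
            using K0 True by (simp add: measure_pmf.emeasure_eq_measure[symmetric])
          then have "measure_pmf.prob (gw F n) {k. x * m ^ n < real k} \<le> K0 * T (x * m ^ n)"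
            using K00 T0 by (simp add: ennreal_le_iff)
          also have "\<dots> \<le> K0 * T x"
          proof -
            have "x \<le> x * m ^ n" using x1 m1 by (simp add: one_le_power)
            then show ?thesis unfolding T_def using K00 by (intro mult_left_mono Fbar_mono) auto
          qed
          also have "\<dots> \<le> c * T x" unfolding c_def using T0 by (intro mult_right_mono) auto
          finally show ?thesis .
        next
          case False
          define n' where "n' = n - N"
          have nn: "n = N + n'" unfolding n'_def using False by simp
          have n'n: "n' < n" using nn N1 by simp
          define s where "s = x * m ^ n"
          have s0: "s > 0" unfolding s_def using x1 m0 by simp
          have mn': "(\<integral>\<^sup>+k. ennreal (real k) \<partial>gw F n') \<le> ennreal (m ^ n')"
            using gw_mean[OF mean] m0 by simp
          have mN: "(\<integral>\<^sup>+k. ennreal (real k) \<partial>gw F N) \<le> ennreal (m ^ N)"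
            using gw_mean[OF mean] m0 by simp
          have tN: "\<forall>t. emeasure (gw F N) {k. t < real k} \<le> ennreal (K0 * Fbar F t)"
            using K0 unfolding T_def by simp
          have "emeasure (gw F n) {k. s < real k}
             \<le> ennreal (K0 * (1 + 2 * C * exp 1 ^ r) * Fbar F (s / m ^ n')) + ennreal (m ^ N) * emeasure (gw F n') {k. s / real r < real k}"
            unfolding nn gw_add
            by (rule random_sum_tail[OF dom C1 _ tN K00 r mN mn' _ s0]) (auto simp: Fbar_nonneg m0)
          also have "s / real r = (x * y0) * m ^ n'" unfolding s_def y0_def nn by (simp add: power_add field_simps)
          also have "emeasure (gw F n') {k. (x * y0) * m ^ n' < real k} = ennreal (measure_pmf.prob (gw F n') {k. (x * y0) * m ^ n' < real k})"
            by (simp add: measure_pmf.emeasure_eq_measure)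
          also have "ennreal (K0 * (1 + 2 * C * exp 1 ^ r) * Fbar F (s / m ^ n')) + ennreal (m ^ N) * ennreal (measure_pmf.prob (gw F n') {k. (x * y0) * m ^ n' < real k})
              = ennreal (A * T (s / m ^ n') + m ^ N * measure_pmf.prob (gw F n') {k. (x * y0) * m ^ n' < real k})"
            unfolding A_def T_def using K00 C1 m0 by (simp add: Fbar_nonneg ennreal_plus ennreal_mult')
          finally have e0: "emeasure (gw F n) {k. s < real k}
              \<le> ennreal (A * T (s / m ^ n') + m ^ N * measure_pmf.prob (gw F n') {k. (x * y0) * m ^ n' < real k})" .
          have nn0: "0 \<le> A * T (s / m ^ n') + m ^ N * measure_pmf.prob (gw F n') {k. (x * y0) * m ^ n' < real k}"
            using A0 T0 m0 by simp
          have e1: "measure_pmf.prob (gw F n) {k. s < real k}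
              \<le> A * T (s / m ^ n') + m ^ N * measure_pmf.prob (gw F n') {k. (x * y0) * m ^ n' < real k}"
            using e0 unfolding measure_pmf.emeasure_eq_measure ennreal_le_iff[OF nn0] .
          have t1: "A * T (s / m ^ n') \<le> A * T x"
          proof -
            have "s / m ^ n' = x * m ^ N" unfolding s_def nn using m0 by (simp add: power_add)
            moreover have "x \<le> x * m ^ N" using x1 m1 by (simp add: one_le_power)
            ultimately show ?thesis unfolding T_def using A0 by (intro mult_left_mono Fbar_mono) auto
          qed
          have t2: "m ^ N * measure_pmf.prob (gw F n') {k. (x * y0) * m ^ n' < real k} \<le> c * (T x / 2)"
          proof -
            have "measure_pmf.prob (gw F n') {k. (x * y0) * m ^ n' < real k} \<le> c * T (x * y0)"
              using less[OF n'n] by blast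
            also have "\<dots> \<le> c * (c' * T x / y0 powr (1 + \<delta>))"
              using tb x1 y01 c0 by (intro mult_left_mono) auto
            finally have "m ^ N * measure_pmf.prob (gw F n') {k. (x * y0) * m ^ n' < real k}
                \<le> m ^ N * (c * (c' * T x / y0 powr (1 + \<delta>)))" using m0 by (intro mult_left_mono) auto
            also have "\<dots> = c * (m ^ N * (c' * T x / y0 powr (1 + \<delta>)))" by (simp add: mult_ac)
            also have "\<dots> \<le> c * (T x / 2)" using key c0 by (intro mult_left_mono) auto
            finally show ?thesis .
          qed
          have "A * T x \<le> c / 2 * T x" unfolding c_def using T0 by (intro mult_right_mono) auto
          then show ?thesis using e1 t1 t2 unfolding s_def by (simp add: field_simps)
        qed
      qed
    qed
  qed
  show ?thesis
  proof (intro exI[of _ c] allI)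
    fix n :: nat and x :: real
    have "{k. real k / offspring_mean F ^ n > x} = {k. x * m ^ n < real k}"
      unfolding m_def[symmetric] using m0 by (auto simp: pos_less_divide_eq)
    then show "measure_pmf.prob (gw F n) {k. real k / offspring_mean F ^ n > x} \<le> c * Fbar F x"
      using claim[of n] unfolding T_def by simp
  qed
qed

end
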